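(* Let $X$ and $Y$ be infinite metrizable compact spaces and let $Z$ be a metrizable space containing a homeomorphic copy of $\mathbb R$. Then a compact space $K$ embeds homeomorphically into $S(X\times Y,Z)$ if and only if $K$ is metrizable.
   Context: All compact spaces are assumed Hausdorff. For topological spaces $X,Y,Z$, a function $f:X\times Y\to Z$ is separately continuous if $y\mapsto f(x,y)$ is continuous for every $x\in X$ and $x\mapsto f(x,y)$ is continuous for every $y\in Y$. $S(X\times Y,Z)$ denotes the set of all separately continuous functions $X\times Y\to Z$. For $p=(a,b)\in X\times Y$, the cross of $p$ is $\mathrm{cr}\{p\}=(\{a\}\times Y)\cup(X\times\{b\})$. For $X,Y$ compact and $Z$ metrizable with a compatible metric $d$, $S(X\times Y,Z)$ carries the topology generated by the family of extended pseudometrics $d_c(s,t)=\sup_{p\in\mathrm{cr}\{c\}} d(s(p),t(p))$, $c\in X\times Y$ (the cross-uniform topology); it coincides with the cross-open topology, generated by the subbase of sets $\{s: s(A)\subseteq W\}$ with $W$ open in $Z$ and $A=\overline{G}\cap C$, where $C=\mathrm{cr}\{p\}$ for some $p$ and $G$ is open in $C$. *)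

theory Defs
  imports "HOL-Analysis.Analysis"
begin

text \<open>Separately continuous functions $X \times Y \to Z$, represented as extensional
  functions on the carrier $X \times Y$ (undefined outside the carrier).\<close>
definition sep_cont :: "'a topology \<Rightarrow> 'b topology \<Rightarrow> 'c topology \<Rightarrow> ('a \<times> 'b \<Rightarrow> 'c) set" where
  "sep_cont X Y Z =
     {f. f \<in> extensional (topspace X \<times> topspace Y)
       \<and> f \<in> topspace X \<times> topspace Y \<rightarrow> topspace Z
       \<and> (\<forall>x\<in>topspace X. continuous_map Y Z (\<lambda>y. f (x, y)))
       \<and> (\<forall>y\<in>topspace Y. continuous_map X Z (\<lambda>x. f (x, y)))}"

definition cross :: "'a topology \<Rightarrow> 'b topology \<Rightarrow> 'a \<times> 'b \<Rightarrow> ('a \<times> 'b) set" where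
  "cross X Y p = ({fst p} \<times> topspace Y) \<union> (topspace X \<times> {snd p})"

definition cross_sets :: "'a topology \<Rightarrow> 'b topology \<Rightarrow> ('a \<times> 'b) set set" where
  "cross_sets X Y =
     {A. \<exists>p\<in>topspace X \<times> topspace Y. \<exists>G.
           openin (subtopology (prod_topology X Y) (cross X Y p)) G
         \<and> A = (prod_topology X Y closure_of G) \<inter> cross X Y p}"

definition cross_open_topology ::
  "'a topology \<Rightarrow> 'b topology \<Rightarrow> 'c topology \<Rightarrow> ('a \<times> 'b \<Rightarrow> 'c) topology" where
  "cross_open_topology X Y Z =
     topology_generated_by
       {{s \<in> sep_cont X Y Z. s ` A \<subseteq> W} | A W. A \<in> cross_sets X Y \<and> openin Z W}"

end

theory Submission
  imports Defs
begin


lemma compact_metric_dense: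
  assumes "compact_space (mtopology_of m)"
  obtains C where "countable C" "C \<subseteq> mspace m" "mtopology_of m closure_of C = mspace m"
proof -
  interpret Metric_space "mspace m" "mdist m" by simp
  have mt: "mtopology_of m = mtopology" by (simp add: mtopology_of_def)
  have "mtotally_bounded (mspace m)" using assms compactin_imp_mtotally_bounded
    by (metis compact_space_def mt topspace_mtopology)
  then have "\<forall>n. \<exists>K. finite K \<and> K \<subseteq> mspace m \<and> mspace m \<subseteq> (\<Union>x\<in>K. mball x (1/Suc n))"
    unfolding mtotally_bounded_def by simp
  then obtain Kf where Kf: "\<And>n. finite (Kf n) \<and> Kf n \<subseteq> mspace m \<and> mspace m \<subseteq> (\<Union>x\<in>Kf n. mball x (1/Suc n))"
    by metis
  define C where "C = (\<Union>n. Kf n)"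
  have "countable C" unfolding C_def using Kf by (simp add: countable_finite)
  moreover have "C \<subseteq> mspace m" unfolding C_def using Kf by blast
  moreover have "mtopology_of m closure_of C = mspace m"
  proof -
    have "x \<in> mtopology closure_of C" if x: "x \<in> mspace m" for x
      unfolding metric_closure_of
    proof (simp add: x, intro allI impI)
      fix r :: real assume "r > 0"
      then obtain n where n: "1 / real (Suc n) < r"
        by (metis nat_approx_posE)
      then obtain y where y: "y \<in> Kf n" "x \<in> mball y (1/Suc n)" using Kf x by blast
      then have "y \<in> C" "y \<in> mball x r" using n Kf unfolding C_def by (auto simp: commute)
      then show "\<exists>y\<in>C. y \<in> mspace m \<and> mdist m x y < r" by auto
    qed
    then show ?thesis using closure_of_subset_topspace mt by fastforce
  qed
  ultimately show ?thesis using that by blast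
qed



lemma cross_open_topspace:
  assumes "topspace X \<noteq> {}" "topspace Y \<noteq> {}"
  shows "topspace (cross_open_topology X Y Z) = sep_cont X Y Z"
proof -
  obtain a b where ab: "a \<in> topspace X" "b \<in> topspace Y" using assms by blast
  have "{} \<in> cross_sets X Y"
    unfolding cross_sets_def
    by (rule CollectI, rule bexI[where x="(a,b)"], rule exI[where x="{}"]) (use ab in auto)
  then have "sep_cont X Y Z \<in> {{s \<in> sep_cont X Y Z. s ` A \<subseteq> W} | A W. A \<in> cross_sets X Y \<and> openin Z W}"
  proof -
    have "sep_cont X Y Z = {s \<in> sep_cont X Y Z. s ` {} \<subseteq> topspace Z}" by auto
    then show ?thesis using \<open>{} \<in> cross_sets X Y\<close> openin_topspace by blast
  qed
  then show ?thesis
    unfolding cross_open_topology_def topology_generated_by_topspace by blast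
qed

lemma cross_closed:
  assumes "Hausdorff_space X" "Hausdorff_space Y" "p \<in> topspace X \<times> topspace Y"
  shows "closedin (prod_topology X Y) (cross X Y p)"
  unfolding cross_def using assms
  by (intro closedin_Un) (auto simp: closedin_prod_Times_iff closedin_Hausdorff_singleton)

lemma sep_cont_on_cross:
  assumes s: "s \<in> sep_cont X Y Z" and p: "p \<in> topspace X \<times> topspace Y"
    and H: "Hausdorff_space X" "Hausdorff_space Y"
  shows "continuous_map (subtopology (prod_topology X Y) (cross X Y p)) Z s"
proof -
  obtain a b where pab: "p = (a,b)" by fastforce
  define T where "T = (\<lambda>i. if i then {a} \<times> topspace Y else topspace X \<times> {b})"
  have a: "a \<in> topspace X" and b: "b \<in> topspace Y" using p pab by auto
  have cr: "cross X Y p = T True \<union> T False" unfolding T_def cross_def pab by simp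
  show ?thesis
  proof (rule pasting_lemma_closed[where I="{True,False}" and T=T and f="\<lambda>i. s"])
    fix i assume "i \<in> {True, False}"
    show "closedin (subtopology (prod_topology X Y) (cross X Y p)) (T i)"
      using H a b
      by (intro closedin_subset_topspace) (auto simp: T_def cr closedin_prod_Times_iff closedin_Hausdorff_singleton)
    have sub: "subtopology (subtopology (prod_topology X Y) (cross X Y p)) (T i) = subtopology (prod_topology X Y) (T i)"
    proof -
      have "(T True \<union> T False) \<inter> T i = T i" by (cases i) auto
      then show ?thesis by (simp add: subtopology_subtopology cr)
    qed
    have "continuous_map (subtopology (prod_topology X Y) (T i)) Z s"
    proof (cases i)
      case True
      have c: "continuous_map Y Z (\<lambda>y. s (a, y))" using s a unfolding sep_cont_def by blast
      have "continuous_map (subtopology (prod_topology X Y) (T i)) Z ((\<lambda>y. s (a, y)) \<circ> snd)"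
        by (intro continuous_map_compose[OF _ c] continuous_map_from_subtopology continuous_map_snd)
      then show ?thesis
        by (rule continuous_map_eq) (auto simp: True T_def)
    next
      case False
      have c: "continuous_map X Z (\<lambda>x. s (x, b))" using s b unfolding sep_cont_def by blast
      have "continuous_map (subtopology (prod_topology X Y) (T i)) Z ((\<lambda>x. s (x, b)) \<circ> fst)"
        by (intro continuous_map_compose[OF _ c] continuous_map_from_subtopology continuous_map_fst)
      then show ?thesis
        by (rule continuous_map_eq) (auto simp: False T_def)
    qed
    then show "continuous_map (subtopology (subtopology (prod_topology X Y) (cross X Y p)) (T i)) Z s"
      using sub by simp
  next
    fix x assume "x \<in> topspace (subtopology (prod_topology X Y) (cross X Y p))"
    then show "\<exists>j. j \<in> {True, False} \<and> x \<in> T j \<and> s x = s x" by (auto simp: cr)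
  qed auto
qed

lemma eval_continuous:
  assumes H: "Hausdorff_space X" "Hausdorff_space Y" and R: "regular_space Z"
    and p: "p \<in> topspace X \<times> topspace Y"
  shows "continuous_map (cross_open_topology X Y Z) Z (\<lambda>s. s p)"
proof -
  have ne: "topspace X \<noteq> {}" "topspace Y \<noteq> {}" using p by auto
  have top: "topspace (cross_open_topology X Y Z) = sep_cont X Y Z"
    using cross_open_topspace[OF ne] .
  let ?C = "cross X Y p"
  let ?P = "prod_topology X Y"
  show ?thesis
    unfolding continuous_map_def
  proof (intro conjI allI impI)
    show "(\<lambda>s. s p) \<in> topspace (cross_open_topology X Y Z) \<rightarrow> topspace Z"
      using p by (auto simp: top sep_cont_def)
  next
    fix W assume W: "openin Z W"
    show "openin (cross_open_topology X Y Z) {s \<in> topspace (cross_open_topology X Y Z). s p \<in> W}"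
    proof (subst openin_subopen, intro ballI)
      fix s assume "s \<in> {s \<in> topspace (cross_open_topology X Y Z). s p \<in> W}"
      then have s: "s \<in> sep_cont X Y Z" and sp: "s p \<in> W" by (auto simp: top)
      have spZ: "s p \<in> topspace Z" using W sp openin_subset by blast
      have clW: "closedin Z (topspace Z - W)" by (simp add: W closedin_diff)
      have spW: "s p \<in> topspace Z - (topspace Z - W)" using spZ sp by blast
      obtain U where U: "openin Z U" "s p \<in> U" "disjnt (topspace Z - W) (Z closure_of U)"
        using R[unfolded regular_space, rule_format, OF conjI[OF clW spW]] by blast
      have clU: "Z closure_of U \<subseteq> W"
        using U(3) closure_of_subset_topspace[of Z U] unfolding disjnt_def by blast
      have cs: "continuous_map (subtopology ?P ?C) Z s"
        using sep_cont_on_cross[OF s p H] .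
      define G where "G = {q \<in> topspace (subtopology ?P ?C). s q \<in> U}"
      have G: "openin (subtopology ?P ?C) G"
        unfolding G_def by (rule openin_continuous_map_preimage[OF cs U(1)])
      define A where "A = (?P closure_of G) \<inter> ?C"
      have A: "A \<in> cross_sets X Y" unfolding cross_sets_def A_def
        by (rule CollectI, rule bexI[OF _ p], rule exI[of _ G], rule conjI[OF G refl])
      have pC: "p \<in> ?C" using p unfolding cross_def by (cases p) auto
      have pG: "p \<in> G" using p pC U(2) by (simp add: G_def)
      have GC: "G \<subseteq> ?C" unfolding G_def by (simp add: subset_iff)
      have "s ` A \<subseteq> W"
      proof
        fix z assume "z \<in> s ` A"
        then obtain q where q: "q \<in> A" "z = s q" by blast
        have "q \<in> subtopology ?P ?C closure_of G"
        proof -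
          have "?C \<inter> G = G" using GC by blast
          moreover have "q \<in> ?C" "q \<in> ?P closure_of G" using q(1) unfolding A_def by blast+
          ultimately show ?thesis by (simp only: closure_of_subtopology) blast
        qed
        then have "s q \<in> Z closure_of (s ` G)"
          using continuous_map_image_closure_subset[OF cs] by blast
        moreover have "Z closure_of (s ` G) \<subseteq> Z closure_of U"
          by (intro closure_of_mono) (auto simp: G_def)
        ultimately show "z \<in> W" using q clU by blast
      qed
      define N where "N = {t \<in> sep_cont X Y Z. t ` A \<subseteq> W}"
      have oN: "openin (cross_open_topology X Y Z) N"
        unfolding cross_open_topology_def N_def
        by (rule topology_generated_by_Basis) (rule CollectI, rule exI[of _ A], rule exI[of _ W], rule conjI[OF refl conjI[OF A W]])
      have sN: "s \<in> N" using s \<open>s ` A \<subseteq> W\<close> by (simp add: N_def)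
      have "G \<subseteq> topspace ?P" unfolding G_def by (simp add: subset_iff)
      then have "G \<subseteq> ?P closure_of G" by (rule closure_of_subset)
      then have pA: "p \<in> A" unfolding A_def using pG pC by blast
      have NS: "N \<subseteq> {s \<in> topspace (cross_open_topology X Y Z). s p \<in> W}"
      proof
        fix t assume "t \<in> N"
        then have "t \<in> sep_cont X Y Z" "t ` A \<subseteq> W" by (simp_all add: N_def)
        then show "t \<in> {s \<in> topspace (cross_open_topology X Y Z). s p \<in> W}"
          using pA by (simp add: top image_subset_iff)
      qed
      show "\<exists>T. openin (cross_open_topology X Y Z) T \<and> s \<in> T \<and> T \<subseteq> {s \<in> topspace (cross_open_topology X Y Z). s p \<in> W}"
        by (rule exI[of _ N], intro conjI oN sN NS)
    qed
  qed
qed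


lemma sep_cont_determined:
  assumes s: "s \<in> sep_cont X Y Z" and t: "t \<in> sep_cont X Y Z" and HZ: "Hausdorff_space Z"
    and DX: "X closure_of DX = topspace X" and DY: "Y closure_of DY = topspace Y"
    and eq: "\<And>x y. x \<in> DX \<Longrightarrow> y \<in> DY \<Longrightarrow> s (x,y) = t (x,y)"
    and DXs: "DX \<subseteq> topspace X"
  shows "s = t"
proof (rule extensionalityI[where A="topspace X \<times> topspace Y"])
  show "s \<in> extensional (topspace X \<times> topspace Y)" "t \<in> extensional (topspace X \<times> topspace Y)"
    using s t by (auto simp: sep_cont_def)
  have 1: "s (x,y) = t (x,y)" if x: "x \<in> DX" and y: "y \<in> topspace Y" for x y
  proof -
    have xt: "x \<in> topspace X" using x DXs by blast
    have c1: "continuous_map Y Z (\<lambda>y. s (x, y))" using s xt unfolding sep_cont_def by blast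
    have c2: "continuous_map Y Z (\<lambda>y. t (x, y))" using t xt unfolding sep_cont_def by blast
    have yc: "y \<in> Y closure_of DY" using DY y by simp
    show ?thesis
      using forall_in_closure_of_eq[OF yc HZ c1 c2] eq[OF x] by blast
  qed
  fix p assume p: "p \<in> topspace X \<times> topspace Y"
  then obtain x y where pxy: "p = (x,y)" and x: "x \<in> topspace X" and y: "y \<in> topspace Y" by auto
  have c1: "continuous_map X Z (\<lambda>x. s (x, y))" using s y unfolding sep_cont_def by blast
  have c2: "continuous_map X Z (\<lambda>x. t (x, y))" using t y unfolding sep_cont_def by blast
  have xc: "x \<in> X closure_of DX" using DX x by simp
  have "s (x,y) = t (x,y)"
    using forall_in_closure_of_eq[OF xc HZ c1 c2] 1 y by blast
  then show "s p = t p" using pxy by simp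
qed



lemma metrizable_via_inj:
  assumes "compact_space K" "metrizable_space M" "continuous_map K M f" "inj_on f (topspace K)"
  shows "metrizable_space K"
proof -
  have "embedding_map K M f"
    using assms by (intro continuous_imp_embedding_map) (auto simp: metrizable_imp_Hausdorff_space)
  then have "K homeomorphic_space subtopology M (f ` topspace K)"
    by (rule embedding_map_imp_homeomorphic_space)
  moreover have "metrizable_space (subtopology M (f ` topspace K))"
    by (rule metrizable_space_subtopology[OF assms(2)])
  ultimately show ?thesis
    using homeomorphic_metrizable_space by blast
qed

lemma metrizable_obtain_metric:
  assumes "metrizable_space X" obtains m where "X = mtopology_of m"
  using assms by (metis Metric_space.mtopology_of metrizable_space_def)



lemma forward_direction:
  assumes "compact_space X" "Hausdorff_space X" "metrizable_space X" "topspace X \<noteq> {}"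
    and "compact_space Y" "Hausdorff_space Y" "metrizable_space Y" "topspace Y \<noteq> {}"
    and MZ: "metrizable_space Z"
    and "compact_space K"
    and emb: "embedding_map K (cross_open_topology X Y Z) f"
  shows "metrizable_space K"
proof -
  obtain mX where mX: "X = mtopology_of mX" using assms(3) metrizable_obtain_metric by blast
  obtain mY where mY: "Y = mtopology_of mY" using assms(7) metrizable_obtain_metric by blast
  obtain DX where DX: "countable DX" "DX \<subseteq> topspace X" "X closure_of DX = topspace X"
  proof (rule compact_metric_dense[of mX])
    show "compact_space (mtopology_of mX)" using assms(1) mX by simp
  qed (use mX in simp)
  obtain DY where DY: "countable DY" "DY \<subseteq> topspace Y" "Y closure_of DY = topspace Y"
  proof (rule compact_metric_dense[of mY])
    show "compact_space (mtopology_of mY)" using assms(5) mY by simp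
  qed (use mY in simp)
  define D where "D = DX \<times> DY"
  have cD: "countable D" using DX DY by (simp add: D_def)
  define M where "M = product_topology (\<lambda>_. Z) D"
  have MM: "metrizable_space M"
  proof -
    have "countable {i \<in> D. \<not> (\<exists>a. topspace Z \<subseteq> {a})}"
      by (rule countable_subset[OF _ cD]) (rule subsetI, simp)
    then show ?thesis unfolding M_def
      by (intro metrizable_space_product_topology[THEN iffD2] disjI2 conjI ballI MZ)
  qed
  have top: "topspace (cross_open_topology X Y Z) = sep_cont X Y Z"
    by (rule cross_open_topspace[OF assms(4) assms(8)])
  have hm: "homeomorphic_map K (subtopology (cross_open_topology X Y Z) (f ` topspace K)) f"
    using emb unfolding embedding_map_def .
  have cf: "continuous_map K (cross_open_topology X Y Z) f"
    using homeomorphic_imp_continuous_map[OF hm] unfolding continuous_map_in_subtopology by (rule conjunct1)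
  have inj: "inj_on f (topspace K)" using homeomorphic_imp_injective_map[OF hm] .
  have fS: "f k \<in> sep_cont X Y Z" if "k \<in> topspace K" for k
    using continuous_map_image_subset_topspace[OF cf] that top by blast
  define g where "g = (\<lambda>k. restrict (\<lambda>p. f k p) D)"
  have "continuous_map K M g"
    unfolding M_def continuous_map_componentwise
  proof (intro conjI ballI)
    show "g ` topspace K \<subseteq> extensional D" by (auto simp: g_def)
    fix p assume p: "p \<in> D"
    then have pt: "p \<in> topspace X \<times> topspace Y" using DX(2) DY(2) unfolding D_def by blast
    have "continuous_map K Z ((\<lambda>s. s p) \<circ> f)"
      by (rule continuous_map_compose[OF cf eval_continuous[OF assms(2) assms(6) metrizable_imp_regular_space[OF MZ] pt]])
    then show "continuous_map K Z (\<lambda>x. g x p)"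
      by (rule continuous_map_eq) (use p in \<open>auto simp: g_def\<close>)
  qed
  moreover have "inj_on g (topspace K)"
  proof (rule inj_onI)
    fix k k' assume k: "k \<in> topspace K" and k': "k' \<in> topspace K" and e: "g k = g k'"
    have "f k = f k'"
    proof (rule sep_cont_determined[OF fS[OF k] fS[OF k'] _ DX(3) DY(3) _ DX(2)])
      show "Hausdorff_space Z" using MZ metrizable_imp_Hausdorff_space by blast
      fix x y assume "x \<in> DX" "y \<in> DY"
      then have "(x,y) \<in> D" by (simp add: D_def)
      then show "f k (x,y) = f k' (x,y)" using fun_cong[OF e, of "(x,y)"] by (simp add: g_def)
    qed
    then show "k = k'" using inj k k' by (auto dest: inj_onD)
  qed
  ultimately show ?thesis by (rule metrizable_via_inj[OF assms(10) MM])
qed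



lemma series_summable:
  fixes a :: "nat \<Rightarrow> 'k \<Rightarrow> real" and \<psi> :: "nat \<Rightarrow> 'x \<Rightarrow> real"
  assumes a01: "\<And>n k. 0 \<le> a n k \<and> a n k \<le> 1" and psi01: "\<And>n x. 0 \<le> \<psi> n x \<and> \<psi> n x \<le> 1"
  shows "summable (\<lambda>n. (1/2)^n * a n k * \<psi> n x)"
    and "\<And>n. \<bar>(1/2)^n * a n k * \<psi> n x\<bar> \<le> (1/2::real)^n"
proof -
  show b: "\<bar>(1/2)^n * a n k * \<psi> n x\<bar> \<le> (1/2::real)^n" for n
  proof -
    have "a n k * \<psi> n x \<le> 1" using a01[of n k] psi01[of n x] by (simp add: mult_le_one)
    moreover have "0 \<le> a n k * \<psi> n x" using a01[of n k] psi01[of n x] by simp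
    ultimately show ?thesis by (simp add: abs_mult mult.assoc mult_left_le)
  qed
  show "summable (\<lambda>n. (1/2)^n * a n k * \<psi> n x)"
    by (rule summable_comparison_test'[where g="\<lambda>n. (1/2::real)^n" and N=0])
       (use b in \<open>auto simp: summable_geometric\<close>)
qed

lemma series_tail:
  fixes a :: "nat \<Rightarrow> 'k \<Rightarrow> real" and \<psi> :: "nat \<Rightarrow> 'x \<Rightarrow> real"
  assumes a01: "\<And>n k. 0 \<le> a n k \<and> a n k \<le> 1" and psi01: "\<And>n x. 0 \<le> \<psi> n x \<and> \<psi> n x \<le> 1"
  shows "\<bar>(\<Sum>n. (1/2)^n * a n k * \<psi> n x) - (\<Sum>n<N. (1/2)^n * a n k * \<psi> n x)\<bar> \<le> 2 * (1/2)^N"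
proof -
  define f where "f n = (1/2)^n * a n k * \<psi> n x" for n
  have sf: "summable f" unfolding f_def by (rule series_summable(1)[OF a01 psi01])
  have bf: "\<bar>f n\<bar> \<le> (1/2)^n" for n unfolding f_def by (rule series_summable(2)[OF a01 psi01])
  have eq: "(\<Sum>n. f n) - (\<Sum>n<N. f n) = (\<Sum>n. f (n + N))"
    using suminf_split_initial_segment[OF sf, of N] by simp
  have sg: "summable (\<lambda>n. (1/2::real)^(n+N))"
    by (simp add: power_add summable_geometric summable_mult2)
  have sfN: "summable (\<lambda>n. norm (f (n + N)))"
    by (rule summable_comparison_test'[OF sg, where N=0]) (use bf in auto)
  have "norm (\<Sum>n. f (n + N)) \<le> (\<Sum>n. norm (f (n + N)))" by (rule summable_norm[OF sfN])
  also have "\<dots> \<le> (\<Sum>n. (1/2::real)^(n+N))"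
    by (rule suminf_le[OF _ sfN sg]) (use bf in auto)
  also have "\<dots> = 2 * (1/2)^N"
  proof -
    have "(\<Sum>n. (1/2::real)^(n+N)) = (\<Sum>n. (1/2::real)^n * (1/2)^N)" by (simp add: power_add)
    also have "\<dots> = (\<Sum>n. (1/2::real)^n) * (1/2)^N" by (rule suminf_mult2[symmetric]) (simp add: summable_geometric)
    also have "\<dots> = 2 * (1/2)^N" by (simp add: suminf_geometric)
    finally show ?thesis .
  qed
  finally show ?thesis using eq by (simp add: f_def)
qed

lemma series_continuous:
  fixes a :: "nat \<Rightarrow> 'k \<Rightarrow> real" and \<psi> :: "nat \<Rightarrow> 'x \<Rightarrow> real"
  assumes a01: "\<And>n k. 0 \<le> a n k \<and> a n k \<le> 1" and psi01: "\<And>n x. 0 \<le> \<psi> n x \<and> \<psi> n x \<le> 1"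
    and ca: "\<And>n. continuous_map K euclideanreal (a n)" and cpsi: "\<And>n. continuous_map X euclideanreal (\<psi> n)"
  shows "continuous_map (prod_topology K X) euclideanreal (\<lambda>z. \<Sum>n. (1/2)^n * a n (fst z) * \<psi> n (snd z))"
proof -
  have "continuous_map (prod_topology K X) Met_TC.mtopology (\<lambda>z. \<Sum>n. (1/2)^n * a n (fst z) * \<psi> n (snd z))"
  proof (rule Met_TC.continuous_map_uniform_limit[where F=sequentially and f="\<lambda>N z. \<Sum>n<N. (1/2)^n * a n (fst z) * \<psi> n (snd z)"])
    show "\<forall>\<^sub>F N in sequentially. continuous_map (prod_topology K X) Met_TC.mtopology (\<lambda>z. \<Sum>n<N. (1/2)^n * a n (fst z) * \<psi> n (snd z))"
    proof (rule always_eventually, intro allI)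
      fix N
      have "continuous_map (prod_topology K X) euclideanreal (\<lambda>z. \<Sum>n<N. (1/2)^n * a n (fst z) * \<psi> n (snd z))"
      proof -
        have cA: "continuous_map (prod_topology K X) euclideanreal (\<lambda>z. a n (fst z))" for n
          using continuous_map_compose[OF continuous_map_fst ca] by (simp add: o_def)
        have cP: "continuous_map (prod_topology K X) euclideanreal (\<lambda>z. \<psi> n (snd z))" for n
          using continuous_map_compose[OF continuous_map_snd cpsi] by (simp add: o_def)
        show ?thesis by (intro continuous_map_sum continuous_map_real_mult cA cP) auto
      qed
      then show "continuous_map (prod_topology K X) Met_TC.mtopology (\<lambda>z. \<Sum>n<N. (1/2)^n * a n (fst z) * \<psi> n (snd z))"
        by simp
    qed
  next
    fix \<epsilon> :: real assume e: "0 < \<epsilon>"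
    obtain N0 where N0: "(1/2::real)^N0 < \<epsilon>/2" using real_arch_pow_inv[of "\<epsilon>/2" "1/2"] e by auto
    show "\<forall>\<^sub>F N in sequentially. \<forall>z\<in>topspace (prod_topology K X). (\<Sum>n. (1/2)^n * a n (fst z) * \<psi> n (snd z)) \<in> UNIV \<and>
           dist (\<Sum>n<N. (1/2)^n * a n (fst z) * \<psi> n (snd z)) (\<Sum>n. (1/2)^n * a n (fst z) * \<psi> n (snd z)) < \<epsilon>"
    proof (rule eventually_sequentiallyI[of N0], intro ballI conjI UNIV_I)
      fix N z assume N: "N0 \<le> N"
      have "(1/2::real)^N \<le> (1/2)^N0" using N by (simp add: power_decreasing)
      then have "2 * (1/2::real)^N < \<epsilon>" using N0 by linarith
      moreover have "\<bar>(\<Sum>n. (1/2)^n * a n (fst z) * \<psi> n (snd z)) - (\<Sum>n<N. (1/2)^n * a n (fst z) * \<psi> n (snd z))\<bar> \<le> 2 * (1/2)^N"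
        by (rule series_tail[OF a01 psi01])
      ultimately show "dist (\<Sum>n<N. (1/2)^n * a n (fst z) * \<psi> n (snd z)) (\<Sum>n. (1/2)^n * a n (fst z) * \<psi> n (snd z)) < \<epsilon>"
        by (simp add: dist_real_def abs_minus_commute)
    qed
  qed simp
  then show ?thesis by simp
qed

lemma series_at_point:
  fixes a :: "nat \<Rightarrow> 'k \<Rightarrow> real" and \<psi> :: "nat \<Rightarrow> 'x \<Rightarrow> real"
  assumes z: "\<And>n m. m < n \<Longrightarrow> \<psi> n (p m) = 0"
  shows "(\<Sum>n. (1/2)^n * a n k * \<psi> n (p m)) = (\<Sum>n<Suc m. (1/2)^n * a n k * \<psi> n (p m))"
  by (rule suminf_finite) (auto simp: z)

lemma series_inj:
  fixes a :: "nat \<Rightarrow> 'k \<Rightarrow> real" and \<psi> :: "nat \<Rightarrow> 'x \<Rightarrow> real"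
  assumes z: "\<And>n m. m < n \<Longrightarrow> \<psi> n (p m) = 0" and o: "\<And>m. \<psi> m (p m) = 1"
    and eq: "\<And>m. (\<Sum>n. (1/2)^n * a n k * \<psi> n (p m)) = (\<Sum>n. (1/2)^n * a n k' * \<psi> n (p m))"
  shows "a m k = a m k'"
proof (induction m rule: less_induct)
  case (less m)
  have "(\<Sum>n<Suc m. (1/2)^n * a n k * \<psi> n (p m)) = (\<Sum>n<Suc m. (1/2)^n * a n k' * \<psi> n (p m))"
    using series_at_point[where \<psi>=\<psi> and p=p and a=a and k=k and m=m, OF z]
      series_at_point[where \<psi>=\<psi> and p=p and a=a and k=k' and m=m, OF z] eq[of m] by simp
  moreover have "(\<Sum>n<m. (1/2)^n * a n k * \<psi> n (p m)) = (\<Sum>n<m. (1/2)^n * a n k' * \<psi> n (p m))"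
    by (rule sum.cong) (auto simp: less)
  ultimately have "(1/2)^m * a m k * \<psi> m (p m) = (1/2)^m * a m k' * \<psi> m (p m)" by simp
  then show ?case using o[of m] by simp
qed



lemma cross_open_Hausdorff:
  assumes HX: "Hausdorff_space X" and HY: "Hausdorff_space Y" and HZ: "Hausdorff_space Z"
    and R: "regular_space Z" and ne: "topspace X \<noteq> {}" "topspace Y \<noteq> {}"
  shows "Hausdorff_space (cross_open_topology X Y Z)"
  unfolding Hausdorff_space_def
proof (intro allI impI)
  fix s t assume st: "s \<in> topspace (cross_open_topology X Y Z) \<and> t \<in> topspace (cross_open_topology X Y Z) \<and> s \<noteq> t"
  have top: "topspace (cross_open_topology X Y Z) = sep_cont X Y Z"
    using cross_open_topspace[OF ne] .
  have s: "s \<in> sep_cont X Y Z" and t: "t \<in> sep_cont X Y Z" and "s \<noteq> t" using st top by auto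
  obtain p where p: "p \<in> topspace X \<times> topspace Y" and sp: "s p \<noteq> t p"
  proof -
    have "\<exists>p \<in> topspace X \<times> topspace Y. s p \<noteq> t p"
    proof (rule ccontr)
      assume "\<not> ?thesis"
      then have "s = t"
        using s t by (intro extensionalityI[where A="topspace X \<times> topspace Y"]) (auto simp: sep_cont_def)
      then show False using \<open>s \<noteq> t\<close> by simp
    qed
    then show ?thesis using that by blast
  qed
  have spZ: "s p \<in> topspace Z" and tpZ: "t p \<in> topspace Z"
    using s t p by (auto simp: sep_cont_def Pi_iff)
  obtain U0 V0 where UV: "openin Z U0" "openin Z V0" "s p \<in> U0" "t p \<in> V0" "disjnt U0 V0"
    using HZ spZ tpZ sp unfolding Hausdorff_space_def by blast
  have ce: "continuous_map (cross_open_topology X Y Z) Z (\<lambda>r. r p)"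
    by (rule eval_continuous[OF HX HY R p])
  show "\<exists>U V. openin (cross_open_topology X Y Z) U \<and> openin (cross_open_topology X Y Z) V \<and> s \<in> U \<and> t \<in> V \<and> disjnt U V"
  proof (intro exI conjI)
    show "openin (cross_open_topology X Y Z) {r \<in> topspace (cross_open_topology X Y Z). r p \<in> U0}"
      by (rule openin_continuous_map_preimage[OF ce UV(1)])
    show "openin (cross_open_topology X Y Z) {r \<in> topspace (cross_open_topology X Y Z). r p \<in> V0}"
      by (rule openin_continuous_map_preimage[OF ce UV(2)])
    show "s \<in> {r \<in> topspace (cross_open_topology X Y Z). r p \<in> U0}" using st UV by auto
    show "t \<in> {r \<in> topspace (cross_open_topology X Y Z). r p \<in> V0}" using st UV by auto
    show "disjnt {r \<in> topspace (cross_open_topology X Y Z). r p \<in> U0} {r \<in> topspace (cross_open_topology X Y Z). r p \<in> V0}"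
      using UV(5) by (auto simp: disjnt_iff)
  qed
qed

lemma backward_direction:
  fixes X :: "'a topology" and Y :: "'b topology" and Z :: "'c topology" and K :: "'d topology"
  assumes HX: "Hausdorff_space X" and MX: "metrizable_space X" and infX: "infinite (topspace X)"
    and cX: "compact_space X" and cY: "compact_space Y" and HY: "Hausdorff_space Y" and neY: "topspace Y \<noteq> {}"
    and MZ: "metrizable_space Z" and hT: "\<exists>T. subtopology Z T homeomorphic_space euclideanreal"
    and cK: "compact_space K" and MK: "metrizable_space K"
  shows "\<exists>f. embedding_map K (cross_open_topology X Y Z) f"
proof -
  have neX: "topspace X \<noteq> {}" using infX by auto
  obtain T where "subtopology Z T homeomorphic_space euclideanreal" using hT by blast
  then obtain h0 h where hm: "homeomorphic_maps (subtopology Z T) euclideanreal h0 h"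
    unfolding homeomorphic_space_def by blast
  have hm': "continuous_map (subtopology Z T) euclideanreal h0 \<and> continuous_map euclideanreal (subtopology Z T) h
      \<and> (\<forall>x\<in>topspace (subtopology Z T). h (h0 x) = x) \<and> (\<forall>y\<in>topspace euclideanreal. h0 (h y) = y)"
    using hm unfolding homeomorphic_maps_def by blast
  have "continuous_map euclideanreal (subtopology Z T) h" using hm' by blast
  then have ch: "continuous_map euclideanreal Z h"
    unfolding continuous_map_in_subtopology by (rule conjunct1)
  have hinv: "\<And>r. h0 (h r) = r" using hm' by simp
  have hZ: "\<And>r. h r \<in> topspace Z"
    using continuous_map_image_subset_topspace[OF ch] by (simp add: image_subset_iff)
  obtain mK where mK: "K = mtopology_of mK" using metrizable_obtain_metric[OF MK] by blast
  obtain mX where mX: "X = mtopology_of mX" using metrizable_obtain_metric[OF MX] by blast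
  obtain C where C: "countable C" "C \<subseteq> mspace mK" "mtopology_of mK closure_of C = mspace mK"
  proof (rule compact_metric_dense[of mK])
    show "compact_space (mtopology_of mK)" using cK mK by simp
  qed
  define a where "a n k = (if C = {} then 0 else min 1 (mdist mK k (from_nat_into C n)))" for n k
  obtain p :: "nat \<Rightarrow> 'a" where p: "inj p" "range p \<subseteq> topspace X"
    using infinite_countable_subset[OF infX] by blast
  have pX: "p j \<in> mspace mX" for j using p(2) mX by (simp add: image_subset_iff)
  define \<psi> where "\<psi> n x = (\<Prod>j<n. min 1 (mdist mX x (p j) / mdist mX (p n) (p j)))" for n x
  define G where "G z = (\<Sum>n. (1/2)^n * a n (fst z) * \<psi> n (snd z))" for z
  have a01: "0 \<le> a n k \<and> a n k \<le> 1" for n k by (simp add: a_def)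
  have f01: "0 \<le> min 1 (mdist mX x (p j) / mdist mX (p n) (p j)) \<and> min 1 (mdist mX x (p j) / mdist mX (p n) (p j)) \<le> 1" for x n j
    by simp
  have psi01: "0 \<le> \<psi> n x \<and> \<psi> n x \<le> 1" for n x
    unfolding \<psi>_def using f01 by (simp add: prod_nonneg prod_le_1)
  have ca: "continuous_map K euclideanreal (a n)" for n
  proof (cases "C = {}")
    case True then show ?thesis by (simp add: a_def[abs_def])
  next
    case False
    have c: "from_nat_into C n \<in> mspace mK" using C(2) from_nat_into[OF False] by (rule subsetD)
    have "continuous_map K (mtopology_of mK) (\<lambda>k. k)" by (simp add: mK)
    moreover have "continuous_map K (mtopology_of mK) (\<lambda>k. from_nat_into C n)" by (simp add: c)
    ultimately have "continuous_map K euclideanreal (\<lambda>k. mdist mK k (from_nat_into C n))"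
      by (rule continuous_map_mdist)
    then have "continuous_map K euclideanreal (\<lambda>k. min 1 (mdist mK k (from_nat_into C n)))"
      by (intro continuous_map_real_min) simp_all
    then show ?thesis by (simp add: a_def[abs_def] False)
  qed
  have cfac: "continuous_map X euclideanreal (\<lambda>x. min 1 (mdist mX x (p j) / mdist mX (p n) (p j)))"
    if jn: "j < n" for j n
  proof -
    have "p n \<noteq> p j" using p(1) jn by (auto dest: injD)
    then have nz: "mdist mX (p n) (p j) \<noteq> 0" using pX by simp
    have "continuous_map X (mtopology_of mX) (\<lambda>x. x)" by (simp add: mX)
    moreover have "continuous_map X (mtopology_of mX) (\<lambda>x. p j)" by (simp add: pX)
    ultimately have "continuous_map X euclideanreal (\<lambda>x. mdist mX x (p j))"
      by (rule continuous_map_mdist)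
    then have "continuous_map X euclideanreal (\<lambda>x. mdist mX x (p j) / mdist mX (p n) (p j))"
      by (rule continuous_map_real_divide) (simp_all add: nz)
    then show ?thesis by (intro continuous_map_real_min) simp_all
  qed
  have cpsi: "continuous_map X euclideanreal (\<psi> n)" for n
    unfolding \<psi>_def[abs_def]
    by (rule continuous_map_prod) (simp_all add: cfac)
  have Gc: "continuous_map (prod_topology K X) euclideanreal G"
    unfolding G_def[abs_def] by (rule series_continuous[OF a01 psi01 ca cpsi])
  have psi_zero: "\<psi> n (p m) = 0" if "m < n" for n m
    unfolding \<psi>_def
  proof (rule prod_zero)
    show "\<exists>j\<in>{..<n}. min 1 (mdist mX (p m) (p j) / mdist mX (p n) (p j)) = 0"
    proof (intro bexI[of _ m])
      have "mdist mX (p m) (p m) = 0" using pX[of m] by simp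
      then show "min 1 (mdist mX (p m) (p m) / mdist mX (p n) (p m)) = 0" by simp
    qed (use that in simp)
  qed simp
  have psi_one: "\<psi> m (p m) = 1" for m
    unfolding \<psi>_def
  proof (rule prod.neutral, intro ballI)
    fix j assume "j \<in> {..<m}"
    then have "p m \<noteq> p j" using p(1) by (auto dest: injD)
    then have "mdist mX (p m) (p j) \<noteq> 0" using pX by simp
    then have "mdist mX (p m) (p j) > 0" by (simp add: order_less_le)
    then show "min 1 (mdist mX (p m) (p j) / mdist mX (p m) (p j)) = 1" by simp
  qed
  have Ginj: "k = k'" if k: "k \<in> topspace K" and k': "k' \<in> topspace K"
    and eqG: "\<And>x. x \<in> topspace X \<Longrightarrow> G (k,x) = G (k',x)" for k k'
  proof -
    have eqm: "(\<Sum>n. (1/2)^n * a n k * \<psi> n (p m')) = (\<Sum>n. (1/2)^n * a n k' * \<psi> n (p m'))" for m'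
    proof -
      have pm: "p m' \<in> topspace X" using p(2) by (simp add: image_subset_iff)
      show ?thesis using eqG[OF pm] unfolding G_def by (simp only: fst_conv snd_conv)
    qed
    have am: "a m k = a m k'" for m
      by (rule series_inj[where \<psi>=\<psi> and p=p, OF psi_zero psi_one eqm])
    show "k = k'"
    proof (rule ccontr)
      assume ne: "k \<noteq> k'"
      interpret Metric_space "mspace mK" "mdist mK" by (rule Metric_space_mspace_mdist)
      have kM: "k \<in> mspace mK" using k mK by simp
      have k'M: "k' \<in> mspace mK" using k' mK by simp
      have Cne: "C \<noteq> {}"
      proof
        assume "C = {}"
        then have "mspace mK = {}" using C(3) by simp
        then show False using kM by simp
      qed
      define r where "r = mdist mK k k'"
      have r: "r > 0" using ne kM k'M by (simp add: r_def)
      have "k \<in> mtopology closure_of C" using C(3) kM by (simp add: mtopology_of_def)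
      then have cl: "\<forall>e>0. \<exists>y\<in>C. y \<in> mball k e" unfolding metric_closure_of by simp
      have "min 1 (r/2) > 0" using r by simp
      then obtain c where c: "c \<in> C" "c \<in> mball k (min 1 (r/2))" using cl by blast
      obtain n where n: "from_nat_into C n = c" using from_nat_into_surj[OF C(1) c(1)] by blast
      have cM: "c \<in> mspace mK" and dkc: "mdist mK k c < min 1 (r/2)" using c(2) by simp_all
      have "r \<le> mdist mK k c + mdist mK c k'" unfolding r_def by (rule triangle[OF kM cM k'M])
      then have "mdist mK k' c > r/2" using dkc by (simp add: commute)
      then have "a n k' \<ge> min 1 (r/2)" using Cne n by (simp add: a_def)
      moreover have "a n k = mdist mK k c" using Cne n dkc by (simp add: a_def)
      ultimately show False using am[of n] dkc by linarith
    qed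
  qed
  define E where "E k = restrict (\<lambda>q. h (G (k, fst q))) (topspace X \<times> topspace Y)" for k
  have ES: "E k \<in> sep_cont X Y Z" if k: "k \<in> topspace K" for k
    unfolding sep_cont_def
  proof (intro CollectI conjI ballI)
    show "E k \<in> extensional (topspace X \<times> topspace Y)" by (simp add: E_def)
    show "E k \<in> topspace X \<times> topspace Y \<rightarrow> topspace Z" by (simp add: E_def hZ)
    fix x assume x: "x \<in> topspace X"
    have "continuous_map Y Z (\<lambda>y. h (G (k, x)))" by (simp add: hZ)
    then show "continuous_map Y Z (\<lambda>y. E k (x, y))"
      by (rule continuous_map_eq) (simp add: E_def x)
  next
    fix y assume y: "y \<in> topspace Y"
    have "continuous_map X (prod_topology K X) (\<lambda>x. (k, x))"
      by (intro continuous_map_pairedI) (auto simp: k)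
    then have "continuous_map X Z (h \<circ> (G \<circ> (\<lambda>x. (k, x))))"
      by (rule continuous_map_compose[OF continuous_map_compose[OF _ Gc] ch])
    then show "continuous_map X Z (\<lambda>x. E k (x, y))"
      by (rule continuous_map_eq) (simp add: E_def y)
  qed
  have UnSB: "\<Union>{{s \<in> sep_cont X Y Z. s ` A \<subseteq> W} | A W. A \<in> cross_sets X Y \<and> openin Z W} = sep_cont X Y Z"
    using cross_open_topspace[OF neX neY, of Z] unfolding cross_open_topology_def topology_generated_by_topspace .
  have cE: "continuous_map K (cross_open_topology X Y Z) E"
    unfolding cross_open_topology_def
  proof (rule continuous_on_generated_topo)
    show "E ` topspace K \<subseteq> \<Union>{{s \<in> sep_cont X Y Z. s ` A \<subseteq> W} | A W. A \<in> cross_sets X Y \<and> openin Z W}"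
      unfolding UnSB by (rule image_subsetI) (rule ES)
  next
    fix U assume "U \<in> {{s \<in> sep_cont X Y Z. s ` A \<subseteq> W} | A W. A \<in> cross_sets X Y \<and> openin Z W}"
    then obtain A W where U: "U = {s \<in> sep_cont X Y Z. s ` A \<subseteq> W}" and A: "A \<in> cross_sets X Y" and W: "openin Z W"
      by blast
    obtain q G0 where q: "q \<in> topspace X \<times> topspace Y" and A_eq: "A = (prod_topology X Y closure_of G0) \<inter> cross X Y q"
      using A unfolding cross_sets_def by blast
    have Acl: "closedin (prod_topology X Y) A"
      unfolding A_eq by (intro closedin_Int closedin_closure_of cross_closed[OF HX HY q])
    have Asub: "A \<subseteq> topspace X \<times> topspace Y" using closedin_subset[OF Acl] by simp
    define Hm where "Hm z = h (G (fst z, fst (snd z)))" for z :: "'d \<times> 'a \<times> 'b"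
    have "continuous_map (prod_topology K (prod_topology X Y)) (prod_topology K X) (\<lambda>z. (fst z, fst (snd z)))"
    proof (rule continuous_map_pairedI[OF continuous_map_fst])
      show "continuous_map (prod_topology K (prod_topology X Y)) X (\<lambda>z. fst (snd z))"
        using continuous_map_compose[OF continuous_map_snd continuous_map_fst] by (simp add: o_def)
    qed
    then have cHm: "continuous_map (prod_topology K (prod_topology X Y)) Z Hm"
      unfolding Hm_def[abs_def]
      using continuous_map_compose[OF continuous_map_compose[OF _ Gc] ch] by (simp add: o_def)
    define Cl where "Cl = (topspace K \<times> A) \<inter> {z \<in> topspace (prod_topology K (prod_topology X Y)). Hm z \<in> topspace Z - W}"
    have clCl: "closedin (prod_topology K (prod_topology X Y)) Cl"
      unfolding Cl_def
    proof (rule closedin_Int)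
      show "closedin (prod_topology K (prod_topology X Y)) (topspace K \<times> A)"
        using Acl by (simp add: closedin_prod_Times_iff)
      show "closedin (prod_topology K (prod_topology X Y)) {z \<in> topspace (prod_topology K (prod_topology X Y)). Hm z \<in> topspace Z - W}"
        by (rule closedin_continuous_map_preimage[OF cHm]) (use W in auto)
    qed
    have "compact_space (prod_topology X Y)" using cX cY by (simp add: compact_space_prod_topology)
    then have "closed_map (prod_topology K (prod_topology X Y)) K fst" by (rule closed_map_fst)
    then have clF: "closedin K (fst ` Cl)" using clCl closed_map_def by blast
    have eq: "{k \<in> topspace K. E k \<in> U} = topspace K - fst ` Cl"
    proof (intro equalityI subsetI)
      fix k assume "k \<in> {k \<in> topspace K. E k \<in> U}"
      then have k: "k \<in> topspace K" and EA: "E k ` A \<subseteq> W" using U by auto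
      have "k \<notin> fst ` Cl"
      proof
        assume "k \<in> fst ` Cl"
        then obtain q' where q': "(k, q') \<in> Cl" by force
        then have "q' \<in> A" "Hm (k,q') \<notin> W" unfolding Cl_def by auto
        moreover have "E k q' = Hm (k,q')" using \<open>q' \<in> A\<close> Asub by (auto simp: E_def Hm_def)
        ultimately show False using EA by auto
      qed
      then show "k \<in> topspace K - fst ` Cl" using k by blast
    next
      fix k assume "k \<in> topspace K - fst ` Cl"
      then have k: "k \<in> topspace K" and nk: "k \<notin> fst ` Cl" by auto
      have "E k ` A \<subseteq> W"
      proof
        fix z assume "z \<in> E k ` A"
        then obtain q' where q': "q' \<in> A" "z = E k q'" by blast
        have Eq: "E k q' = Hm (k,q')" using q' Asub by (auto simp: E_def Hm_def)
        show "z \<in> W"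
        proof (rule ccontr)
          assume "z \<notin> W"
          then have "(k, q') \<in> Cl" unfolding Cl_def using k q' Asub Eq hZ by (auto simp: Hm_def)
          then show False using nk by force
        qed
      qed
      then show "k \<in> {k \<in> topspace K. E k \<in> U}" using k ES U by auto
    qed
    have "openin K (topspace K - fst ` Cl)" by (rule openin_diff[OF openin_topspace clF])
    moreover have "E -` U \<inter> topspace K = {k \<in> topspace K. E k \<in> U}" by auto
    ultimately show "openin K (E -` U \<inter> topspace K)" using eq by simp
  qed
  have injE: "inj_on E (topspace K)"
  proof (rule inj_onI)
    fix k k' assume k: "k \<in> topspace K" and k': "k' \<in> topspace K" and e: "E k = E k'"
    obtain y0 where y0: "y0 \<in> topspace Y" using neY by blast
    show "k = k'"
    proof (rule Ginj[OF k k'])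
      fix x assume x: "x \<in> topspace X"
      have "h (G (k,x)) = h (G (k',x))" using fun_cong[OF e, of "(x,y0)"] x y0 by (simp add: E_def)
      then show "G (k,x) = G (k',x)" using hinv by metis
    qed
  qed
  have "Hausdorff_space (cross_open_topology X Y Z)"
    by (rule cross_open_Hausdorff[OF HX HY metrizable_imp_Hausdorff_space[OF MZ] metrizable_imp_regular_space[OF MZ] neX neY])
  then have "embedding_map K (cross_open_topology X Y Z) E"
    using continuous_imp_embedding_map[OF cE cK] injE by blast
  then show ?thesis by blast
qed


theorem corollary7p2:
  fixes X :: "'a topology" and Y :: "'b topology" and Z :: "'c topology"
    and K :: "'d topology"
  assumes "compact_space X" "Hausdorff_space X" "metrizable_space X" "infinite (topspace X)"
    and "compact_space Y" "Hausdorff_space Y" "metrizable_space Y" "infinite (topspace Y)"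
    and "metrizable_space Z"
    and "\<exists>T. subtopology Z T homeomorphic_space euclideanreal"
    and "compact_space K" "Hausdorff_space K"
  shows "(\<exists>f. embedding_map K (cross_open_topology X Y Z) f) \<longleftrightarrow> metrizable_space K"
proof
  have neX: "topspace X \<noteq> {}" using assms(4) by auto
  have neY: "topspace Y \<noteq> {}" using assms(8) by auto
  assume "\<exists>f. embedding_map K (cross_open_topology X Y Z) f"
  then obtain f where f: "embedding_map K (cross_open_topology X Y Z) f" by blast
  show "metrizable_space K"
    by (rule forward_direction[OF assms(1,2,3) neX assms(5,6,7) neY assms(9) assms(11) f])
next
  have neY: "topspace Y \<noteq> {}" using assms(8) by auto
  assume "metrizable_space K"
  then show "\<exists>f. embedding_map K (cross_open_topology X Y Z) f"
    by (rule backward_direction[OF assms(2) assms(3) assms(4) assms(1) assms(5) assms(6) neY assms(9) assms(10) assms(11)])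
qed

end
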